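(* There exist an objective $f:\mathbb{R}^d\to\mathbb{R}$ satisfying Assumptions 1 and 2, a stochastic gradient oracle $(F,\mathcal{D})$ for $f$ satisfying Assumption 3, an initial point $x^{(0)}\in\mathbb{R}^d$ and a constant $\epsilon_0>0$ such that the following holds: for GaLore with an arbitrary subspace optimizer (as defined in the context), any ranks $r_\ell<\min\{m_\ell,n_\ell\}$, any subspace changing period $\tau\ge 1$, any choice of the maps $\rho_\ell^{(t)}$ (with arbitrary hyperparameters), and every realization of the samples, the iterates satisfy $\|\nabla f(x^{(t)})\|_2^2\ge\epsilon_0$ for all $t\ge 0$.
   Context: Parameters: $x=(\mathrm{vec}(X_1)^\top,\dots,\mathrm{vec}(X_{N_L})^\top)^\top\in\mathbb{R}^d$ with $X_\ell\in\mathbb{R}^{m_\ell\times n_\ell}$, $d=\sum_\ell m_\ell n_\ell$; $f(x)=\mathbb{E}_{\xi\sim\mathcal{D}}F(x;\xi)$ and $\nabla_\ell$ denotes the gradient with respect to $X_\ell$. Assumption 1: $\inf_x f(x)>-\infty$. Assumption 2: $\|\nabla f(x)-\nabla f(y)\|_2\le L\|x-y\|_2$ for all $x,y$. Assumption 3: for all $x$ and $\ell$, $\mathbb{E}_{\xi\sim\mathcal{D}}[\nabla_\ell F(x;\xi)]=\nabla_\ell f(x)$ and $\mathbb{E}_{\xi\sim\mathcal D}\|\nabla_\ell F(x;\xi)-\nabla_\ell f(x)\|_F^2\le\sigma_\ell^2$. GaLore with an arbitrary subspace optimizer: at each iteration $t=0,1,\dots$ draw $\xi^{(t)}\sim\mathcal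 D$ (independently) and set $G_\ell^{(t)}=\nabla_\ell F(x^{(t)};\xi^{(t)})$. If $t\equiv 0\pmod\tau$, compute an SVD $G_\ell^{(t)}=U\Sigma V^\top$ (singular values in nonincreasing order) and set $P_\ell^{(t)}=U[:,:r_\ell]$, $Q_\ell^{(t)}=V[:,:r_\ell]$ (first $r_\ell$ columns); otherwise $P_\ell^{(t)}=P_\ell^{(t-1)}$, $Q_\ell^{(t)}=Q_\ell^{(t-1)}$. Update $X_\ell^{(t+1)}=X_\ell^{(t)}+P_\ell^{(t)}\rho_\ell^{(t)}((P_\ell^{(t)})^\top G_\ell^{(t)})$ if $m_\ell\le n_\ell$, and $X_\ell^{(t+1)}=X_\ell^{(t)}+\rho_\ell^{(t)}(G_\ell^{(t)}Q_\ell^{(t)})(Q_\ell^{(t)})^\top$ if $m_\ell>n_\ell$, where $\rho_\ell^{(t)}$ is an arbitrary (possibly stateful, history-dependent) map sending matrices to matrices of the same size (e.g. Adam, momentum SGD). *)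

theory Defs
  imports "HOL-Probability.Probability"
begin

text \<open>Layer l has shape (m l) x (n l); entries outside this shape are required to be 0
  (predicate valid_param), so the valid parameters are exactly a copy of R^d.
  Matrices are functions row => column => real, used only on their declared index range.\<close>

type_synonym mat = "nat \<Rightarrow> nat \<Rightarrow> real"
type_synonym param = "nat \<Rightarrow> mat"

definition valid_param :: "nat \<Rightarrow> (nat \<Rightarrow> nat) \<Rightarrow> (nat \<Rightarrow> nat) \<Rightarrow> param \<Rightarrow> bool" where
  "valid_param NL m n x \<longleftrightarrow>
     (\<forall>l i j. \<not> (l < NL \<and> i < m l \<and> j < n l) \<longrightarrow> x l i j = 0)"

definition padd :: "param \<Rightarrow> param \<Rightarrow> param" where
  "padd x y = (\<lambda>l i j. x l i j + y l i j)"

definition pdiff :: "param \<Rightarrow> param \<Rightarrow> param" where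
  "pdiff x y = (\<lambda>l i j. x l i j - y l i j)"

definition pinner :: "nat \<Rightarrow> (nat \<Rightarrow> nat) \<Rightarrow> (nat \<Rightarrow> nat) \<Rightarrow> param \<Rightarrow> param \<Rightarrow> real" where
  "pinner NL m n x y = (\<Sum>l<NL. \<Sum>i<m l. \<Sum>j<n l. x l i j * y l i j)"

definition pnorm :: "nat \<Rightarrow> (nat \<Rightarrow> nat) \<Rightarrow> (nat \<Rightarrow> nat) \<Rightarrow> param \<Rightarrow> real" where
  "pnorm NL m n x = sqrt (pinner NL m n x x)"

definition fro_sq :: "nat \<Rightarrow> nat \<Rightarrow> mat \<Rightarrow> real" where
  "fro_sq a b A = (\<Sum>i<a. \<Sum>j<b. (A i j)\<^sup>2)"

definition has_grad :: "nat \<Rightarrow> (nat \<Rightarrow> nat) \<Rightarrow> (nat \<Rightarrow> nat) \<Rightarrow> (param \<Rightarrow> real) \<Rightarrow> (param \<Rightarrow> param) \<Rightarrow> bool" where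
  "has_grad NL m n f g \<longleftrightarrow>
     (\<forall>x. valid_param NL m n x \<longrightarrow> valid_param NL m n (g x) \<and>
        (\<forall>e>0. \<exists>\<delta>>0. \<forall>h. valid_param NL m n h \<and> 0 < pnorm NL m n h \<and> pnorm NL m n h < \<delta> \<longrightarrow>
            \<bar>f (padd x h) - f x - pinner NL m n (g x) h\<bar> \<le> e * pnorm NL m n h))"

definition stoch_oracle ::
  "nat \<Rightarrow> (nat \<Rightarrow> nat) \<Rightarrow> (nat \<Rightarrow> nat) \<Rightarrow> (param \<Rightarrow> real) \<Rightarrow> (param \<Rightarrow> param)
   \<Rightarrow> (param \<Rightarrow> real \<Rightarrow> real) \<Rightarrow> (param \<Rightarrow> real \<Rightarrow> param) \<Rightarrow> real pmf \<Rightarrow> (nat \<Rightarrow> real) \<Rightarrow> bool" where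
  "stoch_oracle NL m n f g F GF D sig \<longleftrightarrow>
     (\<forall>\<xi>. has_grad NL m n (\<lambda>x. F x \<xi>) (\<lambda>x. GF x \<xi>)) \<and>
     (\<forall>x. valid_param NL m n x \<longrightarrow>
        integrable (measure_pmf D) (\<lambda>\<xi>. F x \<xi>) \<and>
        measure_pmf.expectation D (\<lambda>\<xi>. F x \<xi>) = f x) \<and>
     (\<forall>x l i j. valid_param NL m n x \<longrightarrow> l < NL \<longrightarrow> i < m l \<longrightarrow> j < n l \<longrightarrow>
        integrable (measure_pmf D) (\<lambda>\<xi>. GF x \<xi> l i j) \<and>
        measure_pmf.expectation D (\<lambda>\<xi>. GF x \<xi> l i j) = g x l i j) \<and>
     (\<forall>x l. valid_param NL m n x \<longrightarrow> l < NL \<longrightarrow>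
        integrable (measure_pmf D) (\<lambda>\<xi>. fro_sq (m l) (n l) (\<lambda>i j. GF x \<xi> l i j - g x l i j)) \<and>
        measure_pmf.expectation D (\<lambda>\<xi>. fro_sq (m l) (n l) (\<lambda>i j. GF x \<xi> l i j - g x l i j))
          \<le> (sig l)\<^sup>2)"

definition orth :: "nat \<Rightarrow> mat \<Rightarrow> bool" where
  "orth k U \<longleftrightarrow> (\<forall>i<k. \<forall>j<k. (\<Sum>p<k. U p i * U p j) = (if i = j then 1 else 0))"

definition is_svd :: "nat \<Rightarrow> nat \<Rightarrow> mat \<Rightarrow> mat \<Rightarrow> mat \<Rightarrow> mat \<Rightarrow> bool" where
  "is_svd a b G U S V \<longleftrightarrow>
     orth a U \<and> orth b V \<and>
     (\<forall>i<a. \<forall>j<b. i \<noteq> j \<longrightarrow> S i j = 0) \<and>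
     (\<forall>i<min a b. 0 \<le> S i i) \<and>
     (\<forall>i j. i \<le> j \<longrightarrow> j < min a b \<longrightarrow> S j j \<le> S i i) \<and>
     (\<forall>i<a. \<forall>j<b. G i j = (\<Sum>p<a. \<Sum>q<b. U i p * S p q * V j q))"

definition proj_grad ::
  "(nat \<Rightarrow> nat) \<Rightarrow> (nat \<Rightarrow> nat) \<Rightarrow> (param \<Rightarrow> real \<Rightarrow> param) \<Rightarrow> (nat \<Rightarrow> param) \<Rightarrow> (nat \<Rightarrow> param)
   \<Rightarrow> (nat \<Rightarrow> real) \<Rightarrow> (nat \<Rightarrow> param) \<Rightarrow> nat \<Rightarrow> nat \<Rightarrow> mat" where
  "proj_grad m n GF P Q \<xi> x s l =
     (if m l \<le> n l then (\<lambda>a j. \<Sum>i<m l. P s l i a * GF (x s) (\<xi> s) l i j)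
      else (\<lambda>i a. \<Sum>j<n l. GF (x s) (\<xi> s) l i j * Q s l j a))"

text \<open>A run of GaLore with an arbitrary subspace optimizer. rho l t is the (arbitrary,
  stateful / history-dependent) subspace optimizer of layer l at step t: its output may depend
  on the whole history of its inputs R_l^(0), ..., R_l^(t).  P t l (resp. Q t l) is the m x r
  (resp. n x r) projection matrix; its entries outside this range are irrelevant.
  Any SVD may be chosen at the refresh steps.\<close>
definition galore_run ::
  "nat \<Rightarrow> (nat \<Rightarrow> nat) \<Rightarrow> (nat \<Rightarrow> nat) \<Rightarrow> (param \<Rightarrow> real \<Rightarrow> param) \<Rightarrow> (nat \<Rightarrow> nat) \<Rightarrow> nat
   \<Rightarrow> (nat \<Rightarrow> nat \<Rightarrow> (nat \<Rightarrow> mat) \<Rightarrow> mat) \<Rightarrow> (nat \<Rightarrow> real)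
   \<Rightarrow> (nat \<Rightarrow> param) \<Rightarrow> (nat \<Rightarrow> param) \<Rightarrow> (nat \<Rightarrow> param) \<Rightarrow> bool" where
  "galore_run NL m n GF r \<tau> rho \<xi> x P Q \<longleftrightarrow>
     (\<forall>t l. l < NL \<longrightarrow>
        (if t mod \<tau> = 0 then
           (\<exists>U S V. is_svd (m l) (n l) (GF (x t) (\<xi> t) l) U S V \<and>
              (\<forall>i<m l. \<forall>a<r l. P t l i a = U i a) \<and>
              (\<forall>j<n l. \<forall>a<r l. Q t l j a = V j a))
         else
           (\<forall>i<m l. \<forall>a<r l. P t l i a = P (t - 1) l i a) \<and>
           (\<forall>j<n l. \<forall>a<r l. Q t l j a = Q (t - 1) l j a))) \<and>
     (\<forall>t. x (Suc t) = (\<lambda>l i j.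
        if l < NL \<and> i < m l \<and> j < n l then
          (let hist = (\<lambda>s. if s \<le> t then proj_grad m n GF P Q \<xi> x s l else (\<lambda>_ _. 0));
               D = rho l t hist in
           if m l \<le> n l then x t l i j + (\<Sum>a<r l. P t l i a * D a j)
           else x t l i j + (\<Sum>a<r l. D i a * Q t l j a))
        else 0))"

end

theory Submission
  imports Defs
begin

lemma svd_diag:
  assumes svd: "is_svd a b G U S V"
    and G: "\<And>i j. i < a \<Longrightarrow> j < b \<Longrightarrow> G i j = (if i = j \<and> i < min a b then d i else 0)"
    and d0: "d 0 = 1" and dk: "\<And>i. 0 < i \<Longrightarrow> i < min a b \<Longrightarrow> (d i)^2 = 4"
    and p: "Suc p < min a b"
  shows "U 0 p = 0 \<and> V 0 p = 0"
proof -
  define k where "k = min a b"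
  define s where "s q = S q q" for q
  have ka: "k \<le> a" and kb: "k \<le> b" by (auto simp: k_def)
  from svd have oU: "\<And>i j. i<a \<Longrightarrow> j<a \<Longrightarrow> (\<Sum>p<a. U p i * U p j) = (if i = j then 1 else 0)"
    and oV: "\<And>i j. i<b \<Longrightarrow> j<b \<Longrightarrow> (\<Sum>p<b. V p i * V p j) = (if i = j then 1 else 0)"
    and Sd: "\<And>i j. i<a \<Longrightarrow> j<b \<Longrightarrow> i \<noteq> j \<Longrightarrow> S i j = 0"
    and Sp: "\<And>i. i<k \<Longrightarrow> 0 \<le> s i"
    and Sm: "\<And>i j. i \<le> j \<Longrightarrow> j < k \<Longrightarrow> s j \<le> s i"
    and Gd: "\<And>i j. i<a \<Longrightarrow> j<b \<Longrightarrow> G i j = (\<Sum>p<a. \<Sum>q<b. U i p * S p q * V j q)"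
    by (auto simp: is_svd_def orth_def s_def k_def)
  have rep: "G i j = (\<Sum>q<k. U i q * s q * V j q)" if ij: "i<a" "j<b" for i j
  proof -
    have "G i j = (\<Sum>p<a. \<Sum>q<b. U i p * S p q * V j q)" using Gd ij by blast
    also have "\<dots> = (\<Sum>p<a. if p < b then U i p * s p * V j p else 0)"
    proof (rule sum.cong[OF refl])
      fix p assume pa: "p \<in> {..<a}"
      have "(\<Sum>q<b. U i p * S p q * V j q) = (\<Sum>q<b. if q = p then U i p * S p p * V j p else 0)"
        by (rule sum.cong[OF refl]) (use pa Sd in auto)
      then show "(\<Sum>q<b. U i p * S p q * V j q) = (if p < b then U i p * s p * V j p else 0)"
        by (simp add: s_def)
    qed
    also have "\<dots> = (\<Sum>p\<in>{p\<in>{..<a}. p < b}. U i p * s p * V j p)"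
      by (rule sum.inter_filter[symmetric]) simp
    also have "{p\<in>{..<a}. p < b} = {..<k}" by (auto simp: k_def)
    finally show ?thesis .
  qed
  have cV: "(\<Sum>j<b. G i j * V j q) = s q * U i q" if "i<a" "q<k" for i q
  proof -
    have "(\<Sum>j<b. G i j * V j q) = (\<Sum>j<b. \<Sum>q'<k. U i q' * s q' * (V j q' * V j q))"
      using that by (simp add: rep sum_distrib_right mult.assoc)
    also have "\<dots> = (\<Sum>q'<k. U i q' * s q' * (\<Sum>j<b. V j q' * V j q))"
      by (subst sum.swap) (simp add: sum_distrib_left)
    also have "\<dots> = (\<Sum>q'<k. if q' = q then U i q' * s q' else 0)"
      by (rule sum.cong[OF refl]) (use that kb oV in auto)
    also have "\<dots> = s q * U i q" using that by simp
    finally show ?thesis .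
  qed
  have cU: "(\<Sum>i<a. G i j * U i q) = s q * V j q" if "j<b" "q<k" for j q
  proof -
    have "(\<Sum>i<a. G i j * U i q) = (\<Sum>i<a. \<Sum>q'<k. V j q' * s q' * (U i q' * U i q))"
      using that by (intro sum.cong[OF refl]) (simp add: rep sum_distrib_right sum_distrib_left mult_ac)
    also have "\<dots> = (\<Sum>q'<k. V j q' * s q' * (\<Sum>i<a. U i q' * U i q))"
      by (subst sum.swap) (simp add: sum_distrib_left)
    also have "\<dots> = (\<Sum>q'<k. if q' = q then V j q' * s q' else 0)"
      by (rule sum.cong[OF refl]) (use that ka oU in auto)
    also have "\<dots> = s q * V j q" using that by simp
    finally show ?thesis .
  qed
  have eqU: "s q * U i q = (if i<k then d i * V i q else 0)" if "i<a" "q<k" for i q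
  proof -
    have "(\<Sum>j<b. G i j * V j q) = (\<Sum>j<b. if j = i then (if i < k then d i * V i q else 0) else 0)"
      by (rule sum.cong[OF refl]) (use that G in \<open>auto simp: k_def\<close>)
    also have "\<dots> = (if i<k then d i * V i q else 0)" using that kb by auto
    finally show ?thesis using cV[OF that] by simp
  qed
  have eqV: "s q * V j q = (if j<k then d j * U j q else 0)" if "j<b" "q<k" for j q
  proof -
    have "(\<Sum>i<a. G i j * U i q) = (\<Sum>i<a. if i = j then (if j < k then d j * U j q else 0) else 0)"
      by (rule sum.cong[OF refl]) (use that G in \<open>auto simp: k_def\<close>)
    also have "\<dots> = (if j<k then d j * U j q else 0)" using that ka by auto
    finally show ?thesis using cU[OF that] by simp
  qed
  have spec: "s q = 0 \<or> s q = 1 \<or> s q = 2" if q: "q<k" for q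
  proof -
    have "(\<Sum>i<a. U i q * U i q) = 1" using oU[of q q] q ka by simp
    then obtain i where ia: "i<a" and Ui: "U i q \<noteq> 0"
      by (metis (no_types, lifting) lessThan_iff mult_zero_left sum.neutral zero_neq_one)
    show ?thesis
    proof (cases "i<k")
      case True
      have e1: "s q * U i q = d i * V i q" using eqU[OF ia q] True by simp
      have e2: "s q * V i q = d i * U i q" using eqV[of i q] True q kb by simp
      have "(s q)^2 * U i q = (d i)^2 * U i q"
        by (metis e1 e2 mult.assoc mult.commute power2_eq_square)
      then have sq: "(s q)^2 = (d i)^2" using Ui by simp
      show ?thesis
      proof (cases "i = 0")
        case True
        then have "(s q)^2 = 1^2" using sq d0 by simp
        then have "s q = 1" using Sp[OF q] power2_eq_iff_nonneg[of "s q" 1] by simp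
        then show ?thesis by simp
      next
        case False
        then have "(s q)^2 = 2^2" using sq dk[of i] True by (simp add: k_def)
        then have "s q = 2" using Sp[OF q] power2_eq_iff_nonneg[of "s q" 2] by simp
        then show ?thesis by simp
      qed
    next
      case False
      then have "s q * U i q = 0" using eqU[OF ia q] by simp
      then show ?thesis using Ui by simp
    qed
  qed
  have fro: "(\<Sum>i<a. \<Sum>j<b. G i j * G i j) = (\<Sum>q<k. (s q)^2)"
  proof -
    have "(\<Sum>i<a. \<Sum>j<b. G i j * G i j) = (\<Sum>i<a. \<Sum>j<b. \<Sum>q<k. G i j * (U i q * s q * V j q))"
      by (rule sum.cong[OF refl], rule sum.cong[OF refl]) (simp add: rep sum_distrib_left)
    also have "\<dots> = (\<Sum>i<a. \<Sum>q<k. U i q * s q * (\<Sum>j<b. G i j * V j q))"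
      apply (rule sum.cong[OF refl])
      apply (subst sum.swap)
      apply (rule sum.cong[OF refl])
      apply (simp add: sum_distrib_left mult_ac)
      done
    also have "\<dots> = (\<Sum>i<a. \<Sum>q<k. (s q)^2 * (U i q * U i q))"
      by (rule sum.cong[OF refl], rule sum.cong[OF refl]) (simp add: cV power2_eq_square mult_ac)
    also have "\<dots> = (\<Sum>q<k. (s q)^2 * (\<Sum>i<a. U i q * U i q))"
      by (subst sum.swap) (simp add: sum_distrib_left)
    also have "\<dots> = (\<Sum>q<k. (s q)^2)"
      by (rule sum.cong[OF refl]) (use ka oU in auto)
    finally show ?thesis .
  qed
  have lhs: "(\<Sum>i<a. \<Sum>j<b. G i j * G i j) = 4 * real k - 3"
  proof -
    have "(\<Sum>i<a. \<Sum>j<b. G i j * G i j) = (\<Sum>i<a. if i < k then (d i)^2 else 0)"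
    proof (rule sum.cong[OF refl])
      fix i assume "i \<in> {..<a}"
      then have "(\<Sum>j<b. G i j * G i j) = (\<Sum>j<b. if j = i then (if i < k then (d i)^2 else 0) else 0)"
        by (intro sum.cong[OF refl]) (auto simp: G k_def power2_eq_square)
      also have "\<dots> = (if i < k then (d i)^2 else 0)" using kb by auto
      finally show "(\<Sum>j<b. G i j * G i j) = (if i < k then (d i)^2 else 0)" .
    qed
    also have "\<dots> = (\<Sum>i\<in>{i\<in>{..<a}. i < k}. (d i)^2)"
      by (rule sum.inter_filter[symmetric]) simp
    also have "{i\<in>{..<a}. i < k} = {..<k}" using ka by auto
    also have "(\<Sum>i<k. (d i)^2) = (\<Sum>i<k. 4 - (if i = 0 then 3 else 0))"
      by (rule sum.cong[OF refl]) (auto simp: d0 dk k_def)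
    also have "\<dots> = 4 * real k - 3" using p by (simp add: sum_subtractf k_def)
    finally show ?thesis .
  qed
  have s2: "s p = 2"
  proof (rule ccontr)
    assume ne: "s p \<noteq> 2"
    have pk: "p < k" using p by (simp add: k_def)
    have sp1: "s p \<le> 1" using spec[OF pk] ne by auto
    have "(\<Sum>q<k. (s q)^2) \<le> (\<Sum>q<k. 1 + (if q < p then 3 else 0))"
    proof (rule sum_mono)
      fix q assume q: "q \<in> {..<k}"
      show "(s q)^2 \<le> 1 + (if q < p then 3 else 0)"
      proof (cases "q < p")
        case True
        then show ?thesis using spec[of q] q by auto
      next
        case False
        then have "s q \<le> 1" using Sm[of p q] q sp1 by auto
        moreover have "0 \<le> s q" using Sp q by auto
        ultimately have "(s q)^2 \<le> 1" by (simp add: power_le_one)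
        then show ?thesis by simp
      qed
    qed
    also have "\<dots> = real k + (\<Sum>q<k. (if q < p then 3 else 0))"
      by (simp add: sum.distrib)
    also have "(\<Sum>q<k. (if q < p then 3 else 0)) = (\<Sum>q\<in>{q\<in>{..<k}. q < p}. (3::real))"
      by (rule sum.inter_filter[symmetric]) simp
    also have "{q\<in>{..<k}. q < p} = {..<p}" using pk by auto
    finally have "(\<Sum>q<k. (s q)^2) \<le> real k + 3 * real p" by simp
    moreover have "real (Suc p) < real k" using p unfolding k_def of_nat_less_iff by simp
    ultimately show False using fro lhs by simp
  qed
  have k0: "0 < k" using p by (simp add: k_def)
  have pk: "p < k" using p by (simp add: k_def)
  have "2 * U 0 p = V 0 p" using eqU[of 0 p] k0 ka pk s2 d0 by simp
  moreover have "2 * V 0 p = U 0 p" using eqV[of 0 p] k0 kb pk s2 d0 by simp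
  ultimately show ?thesis by simp
qed

definition sgl :: "real \<Rightarrow> param" where
  "sgl z = (\<lambda>l i j. if l = 0 \<and> i = 0 \<and> j = 0 then z else 0)"

definition Nm :: "(nat \<Rightarrow> nat) \<Rightarrow> (nat \<Rightarrow> nat) \<Rightarrow> param" where
  "Nm m n = (\<lambda>l i j. if l = 0 \<and> 0 < i \<and> i = j \<and> i < min (m 0) (n 0) then 2 else 0)"

lemma E_pm: "measure_pmf.expectation (pmf_of_set {-1,1::real}) (h :: real \<Rightarrow> real) = (h (-1) + h 1)/2"
  by (simp add: integral_pmf_of_set)

lemma pinner_sgl:
  assumes "0 < NL" "0 < m 0" "0 < n 0"
  shows "pinner NL m n (sgl z) y = z * y 0 0 0"
proof -
  have "pinner NL m n (sgl z) y = (\<Sum>l<NL. if l = 0 then z * y 0 0 0 else 0)"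
    unfolding pinner_def
  proof (rule sum.cong[OF refl])
    fix l assume "l \<in> {..<NL}"
    have "(\<Sum>i<m l. \<Sum>j<n l. sgl z l i j * y l i j) = (\<Sum>i<m l. if l = 0 \<and> i = 0 then z * y 0 0 0 else 0)"
    proof (rule sum.cong[OF refl])
      fix i assume "i \<in> {..<m l}"
      have "(\<Sum>j<n l. sgl z l i j * y l i j) = (\<Sum>j<n l. if j = 0 then (if l = 0 \<and> i = 0 then z * y 0 0 0 else 0) else 0)"
        by (rule sum.cong[OF refl]) (auto simp: sgl_def)
      also have "\<dots> = (if l = 0 \<and> i = 0 then z * y 0 0 0 else 0)" using assms by auto
      finally show "(\<Sum>j<n l. sgl z l i j * y l i j) = (if l = 0 \<and> i = 0 then z * y 0 0 0 else 0)" .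
    qed
    also have "\<dots> = (if l = 0 then z * y 0 0 0 else 0)"
      using assms by (cases "l = 0") (auto simp: if_distrib cong: if_cong)
    finally show "(\<Sum>i<m l. \<Sum>j<n l. sgl z l i j * y l i j) = (if l = 0 then z * y 0 0 0 else 0)" .
  qed
  also have "\<dots> = z * y 0 0 0" using assms by simp
  finally show ?thesis .
qed

lemma pinner_sym: "pinner NL m n x y = pinner NL m n y x"
  unfolding pinner_def by (simp add: mult.commute)

lemma pinner_add2: "pinner NL m n c (padd x h) = pinner NL m n c x + pinner NL m n c h"
  unfolding pinner_def padd_def by (simp add: sum.distrib distrib_left)

lemma pinner_lin1: "pinner NL m n (\<lambda>l i j. a l i j + t * b l i j) h = pinner NL m n a h + t * pinner NL m n b h"
  unfolding pinner_def by (simp add: sum.distrib distrib_right sum_distrib_left mult.assoc)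

lemma pinner_ge:
  assumes "0 < NL" "0 < m 0" "0 < n 0"
  shows "(y 0 0 0)^2 \<le> pinner NL m n y y"
proof -
  have "(y 0 0 0)^2 \<le> (\<Sum>j<n 0. y 0 0 j * y 0 0 j)"
    using member_le_sum[of 0 "{..<n 0}" "\<lambda>j. y 0 0 j * y 0 0 j"] assms by (simp add: power2_eq_square)
  also have "\<dots> \<le> (\<Sum>i<m 0. \<Sum>j<n 0. y 0 i j * y 0 i j)"
    using member_le_sum[of 0 "{..<m 0}" "\<lambda>i. \<Sum>j<n 0. y 0 i j * y 0 i j"] assms by (simp add: sum_nonneg)
  also have "\<dots> \<le> pinner NL m n y y" unfolding pinner_def
    using member_le_sum[of 0 "{..<NL}" "\<lambda>l. \<Sum>i<m l. \<Sum>j<n l. y l i j * y l i j"] assms by (simp add: sum_nonneg)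
  finally show ?thesis .
qed

lemma pinner_nonneg: "0 \<le> pinner NL m n y y"
  unfolding pinner_def by (simp add: sum_nonneg)

lemma pnorm_ge:
  assumes "0 < NL" "0 < m 0" "0 < n 0"
  shows "\<bar>y 0 0 0\<bar> \<le> pnorm NL m n y"
proof -
  have "sqrt ((y 0 0 0)^2) \<le> sqrt (pinner NL m n y y)"
    by (rule real_sqrt_le_mono[OF pinner_ge[where NL=NL and m=m and n=n, OF assms]])
  then show ?thesis unfolding pnorm_def by (simp only: real_sqrt_abs)
qed

lemma pnorm_sgl:
  assumes "0 < NL" "0 < m 0" "0 < n 0"
  shows "pnorm NL m n (sgl z) = \<bar>z\<bar>"
proof -
  have "pinner NL m n (sgl z) (sgl z) = z * z"
    using pinner_sgl[where NL=NL and m=m and n=n, OF assms, of z "sgl z"] by (simp add: sgl_def)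
  then show ?thesis unfolding pnorm_def by (simp only: real_sqrt_abs2)
qed

lemma valid_sgl:
  assumes "0 < NL" "0 < m 0" "0 < n 0"
  shows "valid_param NL m n (sgl z)"
  using assms unfolding valid_param_def sgl_def by auto

lemma valid_Nm:
  assumes "0 < NL"
  shows "valid_param NL m n (Nm m n)"
  using assms unfolding valid_param_def Nm_def by auto

lemma valid_lin:
  "valid_param NL m n a \<Longrightarrow> valid_param NL m n b \<Longrightarrow> valid_param NL m n (\<lambda>l i j. a l i j + t * b l i j)"
  unfolding valid_param_def by auto

lemma has_grad_f:
  assumes "0 < NL" "0 < m 0" "0 < n 0"
  shows "has_grad NL m n (\<lambda>x. (x 0 0 0)^2 / 2) (\<lambda>x. sgl (x 0 0 0))"
  unfolding has_grad_def
proof (intro allI impI conjI)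
  fix x assume "valid_param NL m n x"
  show "valid_param NL m n (sgl (x 0 0 0))" by (rule valid_sgl[where NL=NL and m=m and n=n, OF assms])
  fix e :: real assume e: "0 < e"
  show "\<exists>\<delta>>0. \<forall>h. valid_param NL m n h \<and> 0 < pnorm NL m n h \<and> pnorm NL m n h < \<delta> \<longrightarrow>
            \<bar>(padd x h 0 0 0)^2/2 - (x 0 0 0)^2/2 - pinner NL m n (sgl (x 0 0 0)) h\<bar> \<le> e * pnorm NL m n h"
  proof (intro exI[of _ "2*e"] conjI allI impI)
    show "0 < 2*e" using e by simp
    fix h assume h: "valid_param NL m n h \<and> 0 < pnorm NL m n h \<and> pnorm NL m n h < 2 * e"
    have eq: "(padd x h 0 0 0)^2/2 - (x 0 0 0)^2/2 - pinner NL m n (sgl (x 0 0 0)) h = (h 0 0 0)^2/2"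
      by (simp add: pinner_sgl[where NL=NL and m=m and n=n, OF assms] padd_def power2_eq_square algebra_simps)
    have a: "\<bar>h 0 0 0\<bar> \<le> pnorm NL m n h" by (rule pnorm_ge[where NL=NL and m=m and n=n, OF assms])
    have "(h 0 0 0)^2 = \<bar>h 0 0 0\<bar> * \<bar>h 0 0 0\<bar>" by (simp add: power2_eq_square)
    also have "\<dots> \<le> pnorm NL m n h * pnorm NL m n h" using a by (intro mult_mono) auto
    also have "\<dots> \<le> (2*e) * pnorm NL m n h" using h by (intro mult_right_mono) auto
    finally have c: "(h 0 0 0)^2 \<le> (2*e) * pnorm NL m n h" .
    have d: "\<bar>(h 0 0 0)^2/2\<bar> = (h 0 0 0)^2/2" by simp
    show "\<bar>(padd x h 0 0 0)^2/2 - (x 0 0 0)^2/2 - pinner NL m n (sgl (x 0 0 0)) h\<bar> \<le> e * pnorm NL m n h"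
    proof -
      have "\<bar>(padd x h 0 0 0)^2/2 - (x 0 0 0)^2/2 - pinner NL m n (sgl (x 0 0 0)) h\<bar> = (h 0 0 0)^2/2"
        by (simp only: eq d)
      moreover have "(h 0 0 0)^2/2 \<le> e * pnorm NL m n h" using c by simp
      ultimately show ?thesis by simp
    qed
  qed
qed

lemma has_grad_lin:
  assumes "has_grad NL m n f g" "valid_param NL m n N"
  shows "has_grad NL m n (\<lambda>x. f x + t * pinner NL m n N x) (\<lambda>x l i j. g x l i j + t * N l i j)"
  unfolding has_grad_def
proof (intro allI impI)
  fix x assume x: "valid_param NL m n x"
  have A: "valid_param NL m n (\<lambda>l i j. g x l i j + t * N l i j)"
    using assms x by (intro valid_lin) (auto simp: has_grad_def)
  have eq: "f (padd x h) + t * pinner NL m n N (padd x h) - (f x + t * pinner NL m n N x)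
      - pinner NL m n (\<lambda>l i j. g x l i j + t * N l i j) h = f (padd x h) - f x - pinner NL m n (g x) h" for h
    by (simp add: pinner_add2 pinner_lin1 pinner_sym[of NL m n N] algebra_simps)
  have B: "\<forall>e>0. \<exists>\<delta>>0. \<forall>h. valid_param NL m n h \<and> 0 < pnorm NL m n h \<and> pnorm NL m n h < \<delta> \<longrightarrow>
       \<bar>f (padd x h) + t * pinner NL m n N (padd x h) - (f x + t * pinner NL m n N x) -
        pinner NL m n (\<lambda>l i j. g x l i j + t * N l i j) h\<bar> \<le> e * pnorm NL m n h"
    unfolding eq using assms(1)[unfolded has_grad_def, THEN spec, of x] x by (rule mp[THEN conjunct2])
  from A B show "valid_param NL m n (\<lambda>l i j. g x l i j + t * N l i j) \<and>
       (\<forall>e>0. \<exists>\<delta>>0. \<forall>h. valid_param NL m n h \<and> 0 < pnorm NL m n h \<and> pnorm NL m n h < \<delta> \<longrightarrow>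
       \<bar>f (padd x h) + t * pinner NL m n N (padd x h) - (f x + t * pinner NL m n N x) -
        pinner NL m n (\<lambda>l i j. g x l i j + t * N l i j) h\<bar> \<le> e * pnorm NL m n h)" by (rule conjI)
qed

lemma stoch_ok:
  assumes NL: "0 < NL" "0 < m 0" "0 < n 0"
  shows "stoch_oracle NL m n (\<lambda>x. (x 0 0 0)^2 / 2) (\<lambda>x. sgl (x 0 0 0))
     (\<lambda>x \<xi>. (x 0 0 0)^2 / 2 + \<xi> * pinner NL m n (Nm m n) x)
     (\<lambda>x \<xi> l i j. sgl (x 0 0 0) l i j + \<xi> * Nm m n l i j)
     (pmf_of_set {-1,1}) (\<lambda>l. sqrt (fro_sq (m l) (n l) (Nm m n l)))"
proof -
  have fin: "finite (set_pmf (pmf_of_set {-1,1::real}))" by simp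
  have h1: "\<forall>\<xi>. has_grad NL m n (\<lambda>x. (x 0 0 0)^2 / 2 + \<xi> * pinner NL m n (Nm m n) x)
     (\<lambda>x l i j. sgl (x 0 0 0) l i j + \<xi> * Nm m n l i j)"
    using has_grad_lin[OF has_grad_f[where NL=NL and m=m and n=n, OF NL] valid_Nm[OF NL(1)]] by blast
  have h2: "\<forall>x. valid_param NL m n x \<longrightarrow>
        integrable (measure_pmf (pmf_of_set {-1,1})) (\<lambda>\<xi>. (x 0 0 0)^2 / 2 + \<xi> * pinner NL m n (Nm m n) x) \<and>
        measure_pmf.expectation (pmf_of_set {-1,1}) (\<lambda>\<xi>. (x 0 0 0)^2 / 2 + \<xi> * pinner NL m n (Nm m n) x) = (x 0 0 0)^2 / 2"
    using fin by (simp add: integrable_measure_pmf_finite E_pm)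
  have h3: "\<forall>x l i j. valid_param NL m n x \<longrightarrow> l < NL \<longrightarrow> i < m l \<longrightarrow> j < n l \<longrightarrow>
        integrable (measure_pmf (pmf_of_set {-1,1})) (\<lambda>\<xi>. sgl (x 0 0 0) l i j + \<xi> * Nm m n l i j) \<and>
        measure_pmf.expectation (pmf_of_set {-1,1}) (\<lambda>\<xi>. sgl (x 0 0 0) l i j + \<xi> * Nm m n l i j) = sgl (x 0 0 0) l i j"
    using fin by (simp add: integrable_measure_pmf_finite E_pm)
  have fnn: "0 \<le> fro_sq a b M" for a b M unfolding fro_sq_def by (simp add: sum_nonneg)
  have h4: "\<forall>x l. valid_param NL m n x \<longrightarrow> l < NL \<longrightarrow>
        integrable (measure_pmf (pmf_of_set {-1,1})) (\<lambda>\<xi>. fro_sq (m l) (n l) (\<lambda>i j. (sgl (x 0 0 0) l i j + \<xi> * Nm m n l i j) - sgl (x 0 0 0) l i j)) \<and>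
        measure_pmf.expectation (pmf_of_set {-1,1}) (\<lambda>\<xi>. fro_sq (m l) (n l) (\<lambda>i j. (sgl (x 0 0 0) l i j + \<xi> * Nm m n l i j) - sgl (x 0 0 0) l i j))
          \<le> (sqrt (fro_sq (m l) (n l) (Nm m n l)))^2"
    using fin by (simp add: integrable_measure_pmf_finite E_pm fro_sq_def fnn[unfolded fro_sq_def])
  show ?thesis unfolding stoch_oracle_def by (intro conjI h1 h2 h3 h4)
qed

lemma galore_inv:
  assumes NL: "0 < NL" "0 < m 0" "0 < n 0"
    and r: "\<forall>l<NL. r l < min (m l) (n l)" and tau: "1 \<le> \<tau>"
    and xi: "\<forall>t. \<xi> t \<in> {-1,1}" and x0: "x 0 = sgl 1"
    and run: "galore_run NL m n GF r \<tau> rho \<xi> x P Q"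
    and GFdef: "GF = (\<lambda>x \<xi> l i j. sgl (x 0 0 0) l i j + \<xi> * Nm m n l i j)"
  shows "x t 0 0 0 = 1"
proof -
  have R1: "\<And>t. (if t mod \<tau> = 0 then
           (\<exists>U S V. is_svd (m 0) (n 0) (GF (x t) (\<xi> t) 0) U S V \<and>
              (\<forall>i<m 0. \<forall>a<r 0. P t 0 i a = U i a) \<and>
              (\<forall>j<n 0. \<forall>a<r 0. Q t 0 j a = V j a))
         else
           (\<forall>i<m 0. \<forall>a<r 0. P t 0 i a = P (t - 1) 0 i a) \<and>
           (\<forall>j<n 0. \<forall>a<r 0. Q t 0 j a = Q (t - 1) 0 j a))"
    using run NL(1) unfolding galore_run_def by blast
  have R2: "\<And>t. x (Suc t) 0 0 0 =
          (let hist = (\<lambda>s. if s \<le> t then proj_grad m n GF P Q \<xi> x s 0 else (\<lambda>_ _. 0));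
               D = rho 0 t hist in
           if m 0 \<le> n 0 then x t 0 0 0 + (\<Sum>a<r 0. P t 0 0 a * D a 0)
           else x t 0 0 0 + (\<Sum>a<r 0. D 0 a * Q t 0 0 a))"
  proof -
    fix t
    have "x (Suc t) = (\<lambda>l i j.
        if l < NL \<and> i < m l \<and> j < n l then
          (let hist = (\<lambda>s. if s \<le> t then proj_grad m n GF P Q \<xi> x s l else (\<lambda>_ _. 0));
               D = rho l t hist in
           if m l \<le> n l then x t l i j + (\<Sum>a<r l. P t l i a * D a j)
           else x t l i j + (\<Sum>a<r l. D i a * Q t l j a))
        else 0)" using run unfolding galore_run_def by blast
    then show "x (Suc t) 0 0 0 =
          (let hist = (\<lambda>s. if s \<le> t then proj_grad m n GF P Q \<xi> x s 0 else (\<lambda>_ _. 0));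
               D = rho 0 t hist in
           if m 0 \<le> n 0 then x t 0 0 0 + (\<Sum>a<r 0. P t 0 0 a * D a 0)
           else x t 0 0 0 + (\<Sum>a<r 0. D 0 a * Q t 0 0 a))" using NL by simp
  qed
  have hold: "(\<forall>i<m 0. \<forall>a<r 0. P t 0 i a = P (t - t mod \<tau>) 0 i a) \<and>
              (\<forall>j<n 0. \<forall>a<r 0. Q t 0 j a = Q (t - t mod \<tau>) 0 j a)" for t
  proof (induction t)
    case 0
    then show ?case by simp
  next
    case (Suc t)
    show ?case
    proof (cases "Suc t mod \<tau> = 0")
      case True
      then show ?thesis by simp
    next
      case False
      then have e: "Suc t mod \<tau> = Suc (t mod \<tau>)" by (metis mod_Suc)
      have "t mod \<tau> \<le> t" by simp
      then have e2: "Suc t - Suc t mod \<tau> = t - t mod \<tau>" using e by simp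
      show ?thesis using R1[of "Suc t"] False Suc.IH unfolding e2 by simp
    qed
  qed
  have main: "\<forall>s\<le>t. x s 0 0 0 = 1"
  proof (induction t)
    case 0
    then show ?case using x0 by (simp add: sgl_def)
  next
    case (Suc t)
    define t' where "t' = t - t mod \<tau>"
    have t't: "t' \<le> t" by (simp add: t'_def)
    have t'm: "t' mod \<tau> = 0" by (simp add: t'_def minus_mod_eq_mult_div)
    have xt': "x t' 0 0 0 = 1" using Suc.IH t't by blast
    have xt: "x t 0 0 0 = 1" using Suc.IH by blast
    obtain U S V where svd: "is_svd (m 0) (n 0) (GF (x t') (\<xi> t') 0) U S V"
      and PU: "\<forall>i<m 0. \<forall>a<r 0. P t' 0 i a = U i a" and QV: "\<forall>j<n 0. \<forall>a<r 0. Q t' 0 j a = V j a"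
      using R1[of t'] t'm by auto
    have xis: "\<xi> t' = -1 \<or> \<xi> t' = 1" using xi by auto
    have UV: "U 0 a = 0 \<and> V 0 a = 0" if a: "a < r 0" for a
    proof (rule svd_diag[OF svd, where d = "\<lambda>i. if i = 0 then 1 else 2 * \<xi> t'"])
      fix i j assume "i < m 0" "j < n 0"
      then show "GF (x t') (\<xi> t') 0 i j = (if i = j \<and> i < min (m 0) (n 0) then (if i = 0 then 1 else 2 * \<xi> t') else 0)"
        unfolding GFdef using xt' by (auto simp: sgl_def Nm_def)
    next
      show "(if (0::nat) = 0 then 1 else 2 * \<xi> t') = 1" by simp
    next
      fix i :: nat assume "0 < i" "i < min (m 0) (n 0)"
      then show "(if i = 0 then 1 else 2 * \<xi> t')^2 = 4" using xis by auto
    next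
      show "Suc a < min (m 0) (n 0)" using r NL a by fastforce
    qed
    have Pz: "P t 0 0 a = 0" if "a < r 0" for a
      using hold[of t] PU UV[OF that] that NL unfolding t'_def by auto
    have Qz: "Q t 0 0 a = 0" if "a < r 0" for a
      using hold[of t] QV UV[OF that] that NL unfolding t'_def by auto
    have "x (Suc t) 0 0 0 = 1"
      using R2[of t] xt Pz Qz by (simp add: Let_def)
    then show ?case using Suc.IH le_Suc_eq by blast
  qed
  then show ?thesis by blast
qed

theorem theorem1:
  fixes NL :: nat and m n :: "nat \<Rightarrow> nat"
  assumes "NL \<ge> 1" and "\<forall>l<NL. 0 < m l \<and> 0 < n l"
  shows "\<exists>(f :: param \<Rightarrow> real) (g :: param \<Rightarrow> param) (L :: real)
            (F :: param \<Rightarrow> real \<Rightarrow> real) (GF :: param \<Rightarrow> real \<Rightarrow> param) (D :: real pmf)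
            (sig :: nat \<Rightarrow> real) (x0 :: param) (eps0 :: real).
     has_grad NL m n f g \<and>
     bdd_below (f ` {x. valid_param NL m n x}) \<and>
     (\<forall>x y. valid_param NL m n x \<longrightarrow> valid_param NL m n y \<longrightarrow>
        pnorm NL m n (pdiff (g x) (g y)) \<le> L * pnorm NL m n (pdiff x y)) \<and>
     stoch_oracle NL m n f g F GF D sig \<and>
     valid_param NL m n x0 \<and> 0 < eps0 \<and>
     (\<forall>(r :: nat \<Rightarrow> nat) (\<tau> :: nat) rho (\<xi> :: nat \<Rightarrow> real) x P Q.
        (\<forall>l<NL. r l < min (m l) (n l)) \<and> 1 \<le> \<tau> \<and>
        (\<forall>t. \<xi> t \<in> set_pmf D) \<and> x 0 = x0 \<and>
        galore_run NL m n GF r \<tau> rho \<xi> x P Q \<longrightarrow>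
        (\<forall>t. eps0 \<le> (pnorm NL m n (g (x t)))\<^sup>2))"
proof -
  have NL: "0 < NL" "0 < m 0" "0 < n 0" using assms by auto
  have lip: "\<forall>x y. valid_param NL m n x \<longrightarrow> valid_param NL m n y \<longrightarrow>
        pnorm NL m n (pdiff (sgl (x 0 0 0)) (sgl (y 0 0 0))) \<le> 1 * pnorm NL m n (pdiff x y)"
  proof (intro allI impI)
    fix x y :: param
    have "pdiff (sgl (x 0 0 0)) (sgl (y 0 0 0)) = sgl (x 0 0 0 - y 0 0 0)"
      unfolding pdiff_def sgl_def by (intro ext) simp
    then have "pnorm NL m n (pdiff (sgl (x 0 0 0)) (sgl (y 0 0 0))) = \<bar>pdiff x y 0 0 0\<bar>"
      using pnorm_sgl[where NL=NL and m=m and n=n, OF NL] by (simp add: pdiff_def)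
    also have "\<dots> \<le> pnorm NL m n (pdiff x y)" by (rule pnorm_ge[where NL=NL and m=m and n=n, OF NL])
    finally show "pnorm NL m n (pdiff (sgl (x 0 0 0)) (sgl (y 0 0 0))) \<le> 1 * pnorm NL m n (pdiff x y)" by simp
  qed
  have bdd: "bdd_below ((\<lambda>x::param. (x 0 0 0)^2 / 2) ` {x. valid_param NL m n x})"
    by (rule bdd_belowI[of _ 0]) auto
  have run: "\<forall>(r :: nat \<Rightarrow> nat) (\<tau> :: nat) rho (\<xi> :: nat \<Rightarrow> real) x P Q.
        (\<forall>l<NL. r l < min (m l) (n l)) \<and> 1 \<le> \<tau> \<and>
        (\<forall>t. \<xi> t \<in> set_pmf (pmf_of_set {-1,1})) \<and> x 0 = sgl 1 \<and>
        galore_run NL m n (\<lambda>x \<xi> l i j. sgl (x 0 0 0) l i j + \<xi> * Nm m n l i j) r \<tau> rho \<xi> x P Q \<longrightarrow>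
        (\<forall>t. (1::real) \<le> (pnorm NL m n (sgl (x t 0 0 0)))\<^sup>2)"
  proof (intro allI impI)
    fix r :: "nat \<Rightarrow> nat" and \<tau> :: nat and rho and \<xi> :: "nat \<Rightarrow> real" and x P Q t
    assume H: "(\<forall>l<NL. r l < min (m l) (n l)) \<and> 1 \<le> \<tau> \<and>
        (\<forall>t. \<xi> t \<in> set_pmf (pmf_of_set {-1,1})) \<and> x 0 = sgl 1 \<and>
        galore_run NL m n (\<lambda>x \<xi> l i j. sgl (x 0 0 0) l i j + \<xi> * Nm m n l i j) r \<tau> rho \<xi> x P Q"
    have xi: "\<forall>t. \<xi> t \<in> {-1,1}" using H by simp
    have "x t 0 0 0 = 1"
      by (rule galore_inv[where NL=NL and m=m and n=n and x=x, OF NL _ _ xi _ _ refl]) (use H in auto)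
    then show "(1::real) \<le> (pnorm NL m n (sgl (x t 0 0 0)))\<^sup>2"
      using pnorm_sgl[where NL=NL and m=m and n=n, OF NL] by simp
  qed
  show ?thesis
    apply (rule exI[where x="\<lambda>x::param. (x 0 0 0)^2 / 2"])
    apply (rule exI[where x="\<lambda>x::param. sgl (x 0 0 0)"])
    apply (rule exI[where x=1])
    apply (rule exI[where x="\<lambda>x \<xi>. (x 0 0 0)^2 / 2 + \<xi> * pinner NL m n (Nm m n) x"])
    apply (rule exI[where x="\<lambda>x \<xi> l i j. sgl (x 0 0 0) l i j + \<xi> * Nm m n l i j"])
    apply (rule exI[where x="pmf_of_set {-1,1}"])
    apply (rule exI[where x="\<lambda>l. sqrt (fro_sq (m l) (n l) (Nm m n l))"])
    apply (rule exI[where x="sgl 1"])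
    apply (rule exI[where x=1])
    apply (intro conjI)
          apply (rule has_grad_f[where NL=NL and m=m and n=n, OF NL])
         apply (rule bdd)
        apply (rule lip)
       apply (rule stoch_ok[where NL=NL and m=m and n=n, OF NL])
      apply (rule valid_sgl[where NL=NL and m=m and n=n, OF NL])
     apply simp
    apply (rule run)
    done
qed

end
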